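(* (1) Let $C$ be a binary Euclidean LCD $[n,k]$ code with generator matrix $G$, let $\mathbf{y}\in C^{\perp_E}$, and let $C'$ be the binary code with generator matrix $G'=\begin{pmatrix}\mathbf{y}\\ G\end{pmatrix}$. If $wt(\mathbf{y})$ is odd, then $C'$ is a binary Euclidean LCD $[n,k+1]$ code. (2) Let $C$ be a ternary Euclidean LCD $[n,k]$ code with generator matrix $G$, let $\mathbf{y}\in C^{\perp_E}$, and let $C'$ be the ternary code with generator matrix $G'=\begin{pmatrix}\mathbf{y}\\ G\end{pmatrix}$. If $wt(\mathbf{y})\not\equiv 0\pmod 3$, then $C'$ is a ternary Euclidean LCD $[n,k+1]$ code. (3) Let $C$ be a quaternary Hermitian LCD $[n,k]$ code with generator matrix $G$, let $\mathbf{y}\in C^{\perp_H}$, and let $C'$ be the quaternary code with generator matrix $G'=\begin{pmatrix}\mathbf{y}\\ G\end{pmatrix}$. If $wt(\mathbf{y})$ is odd, then $C'$ is a quaternary Hermitian LCD $[n,k+1]$ code.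
   Context: Binary, ternary, quaternary codes are linear codes over $\mathbb{F}_2,\mathbb{F}_3,\mathbb{F}_4$. An $[n,k]$ code is a $k$-dimensional subspace of $\mathbb{F}_q^n$; a generator matrix has rows forming a basis. $wt$ is the Hamming weight. Euclidean inner product $\langle x,y\rangle_E=\sum x_iy_i$ with dual $C^{\perp_E}$; on $\mathbb{F}_4^n$ the Hermitian inner product is $\langle x,y\rangle_H=\sum x_iy_i^2$ with dual $C^{\perp_H}$. A code is (Euclidean/Hermitian) LCD if $C\cap C^{\perp}=\{0\}$. *)

theory Defs
  imports Main
begin

text \<open>Vectors of length n over a field 'f are functions 'n => 'f with 'n a finite
index type, n = CARD('n).  A generator matrix with k rows is a list of k vectors.\<close>

definition lin_comb :: "('n \<Rightarrow> 'f::field) list \<Rightarrow> (nat \<Rightarrow> 'f) \<Rightarrow> 'n \<Rightarrow> 'f" where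
  "lin_comb G c = (\<lambda>i. \<Sum>j<length G. c j * (G ! j) i)"

definition row_span :: "('n \<Rightarrow> 'f::field) list \<Rightarrow> ('n \<Rightarrow> 'f) set" where
  "row_span G = {v. \<exists>c. v = lin_comb G c}"

definition rows_lin_indep :: "('n \<Rightarrow> 'f::field) list \<Rightarrow> bool" where
  "rows_lin_indep G \<longleftrightarrow> (\<forall>c. lin_comb G c = (\<lambda>_. 0) \<longrightarrow> (\<forall>j<length G. c j = 0))"

definition is_generator_matrix :: "('n \<Rightarrow> 'f::field) list \<Rightarrow> ('n \<Rightarrow> 'f) set \<Rightarrow> nat \<Rightarrow> bool" where
  "is_generator_matrix G C k \<longleftrightarrow> length G = k \<and> rows_lin_indep G \<and> row_span G = C"

definition wt :: "('n::finite \<Rightarrow> 'f::zero) \<Rightarrow> nat" where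
  "wt x = card {i. x i \<noteq> 0}"

definition inner_E :: "('n::finite \<Rightarrow> 'f::field) \<Rightarrow> ('n \<Rightarrow> 'f) \<Rightarrow> 'f" where
  "inner_E x y = (\<Sum>i\<in>UNIV. x i * y i)"

text \<open>Hermitian inner product on F_4^n: sum x_i y_i^2.\<close>
definition inner_H :: "('n::finite \<Rightarrow> 'f::field) \<Rightarrow> ('n \<Rightarrow> 'f) \<Rightarrow> 'f" where
  "inner_H x y = (\<Sum>i\<in>UNIV. x i * (y i)^2)"

definition dual_E :: "('n::finite \<Rightarrow> 'f::field) set \<Rightarrow> ('n \<Rightarrow> 'f) set" where
  "dual_E C = {x. \<forall>c\<in>C. inner_E x c = 0}"

definition dual_H :: "('n::finite \<Rightarrow> 'f::field) set \<Rightarrow> ('n \<Rightarrow> 'f) set" where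
  "dual_H C = {x. \<forall>c\<in>C. inner_H x c = 0}"

definition LCD_E :: "('n::finite \<Rightarrow> 'f::field) set \<Rightarrow> bool" where
  "LCD_E C \<longleftrightarrow> C \<inter> dual_E C = {\<lambda>_. 0}"

definition LCD_H :: "('n::finite \<Rightarrow> 'f::field) set \<Rightarrow> bool" where
  "LCD_H C \<longleftrightarrow> C \<inter> dual_H C = {\<lambda>_. 0}"

end

theory Submission
  imports Defs
begin

lemma lc_cons: "lin_comb (y#G) c = (\<lambda>i. c 0 * y i + lin_comb G (\<lambda>j. c (Suc j)) i)"
  unfolding lin_comb_def length_Cons sum.lessThan_Suc_shift by simp

lemma fin_pow:
  fixes x :: "'f::field"
  assumes fin: "finite (UNIV::'f set)" and x: "x \<noteq> 0"
  shows "x ^ (card (UNIV::'f set) - 1) = 1"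
proof -
  let ?S = "UNIV - {0::'f}"
  have inj: "inj_on (\<lambda>y. x*y) ?S" using x by (auto simp: inj_on_def)
  have img: "(\<lambda>y. x*y) ` ?S = ?S"
  proof
    show "(\<lambda>y. x*y) ` ?S \<subseteq> ?S" using x by auto
    show "?S \<subseteq> (\<lambda>y. x*y) ` ?S"
    proof
      fix z assume "z \<in> ?S"
      hence "z/x \<in> ?S" "z = x*(z/x)" using x by auto
      thus "z \<in> (\<lambda>y. x*y) ` ?S" by blast
    qed
  qed
  have "prod id ?S = prod (\<lambda>y. x*y) ?S"
    using prod.reindex[OF inj, of id] img by simp
  also have "\<dots> = x ^ card ?S * prod id ?S"
    by (simp add: prod.distrib)
  finally have e: "prod id ?S = x ^ card ?S * prod id ?S" .
  have nz: "prod id ?S \<noteq> 0" using fin by simp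
  have c: "card ?S = card (UNIV::'f set) - 1" using fin by (simp add: card_Diff_singleton)
  from e nz have "x ^ card ?S = 1" by simp
  thus ?thesis using c by simp
qed

lemma fin_char:
  assumes fin: "finite (UNIV::'f::field set)"
  shows "(of_nat (card (UNIV::'f set)) :: 'f) = 0"
proof -
  have inj: "inj (\<lambda>y::'f. 1 + y)" by (auto simp: inj_on_def)
  have img: "range (\<lambda>y::'f. 1 + y) = UNIV"
    by (rule surjI[of _ "\<lambda>z. z - 1"]) simp
  have "sum id (UNIV::'f set) = sum (\<lambda>y. 1 + y) UNIV"
    using sum.reindex[OF inj, of id] img by simp
  also have "\<dots> = of_nat (card (UNIV::'f set)) + sum id UNIV"
    by (simp add: sum.distrib)
  finally show ?thesis by simp
qed

lemma generic:
  fixes B :: "('n::finite \<Rightarrow> 'f::field) \<Rightarrow> ('n \<Rightarrow> 'f) \<Rightarrow> 'f"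
  assumes lin: "\<And>x v w a. B (\<lambda>i. a * x i + v i) w = a * B x w + B v w"
    and sym0: "\<And>v w. B v w = 0 \<Longrightarrow> B w v = 0"
    and gm: "is_generator_matrix G C k"
    and lcd: "C \<inter> {x. \<forall>c\<in>C. B x c = 0} = {\<lambda>_. 0}"
    and y: "\<forall>c\<in>C. B y c = 0"
    and yy: "B y y \<noteq> 0"
  shows "is_generator_matrix (y#G) (row_span (y#G)) (k+1) \<and>
         row_span (y#G) \<inter> {x. \<forall>c\<in>row_span (y#G). B x c = 0} = {\<lambda>_. 0}"
proof -
  have len: "length G = k" and ind: "rows_lin_indep G" and sp: "row_span G = C"
    using gm by (auto simp: is_generator_matrix_def)
  have inC: "lin_comb G c \<in> C" for c using sp by (auto simp: row_span_def)
  have Bvy: "B (lin_comb G c) y = 0" for c using y inC sym0 by blast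
  have key: "B (lin_comb (y#G) c) y = c 0 * B y y" for c
    using lin[of "c 0" y "lin_comb G (\<lambda>j. c (Suc j))" y] Bvy unfolding lc_cons by simp
  have Bz: "B (\<lambda>_. 0) w = 0" for w
  proof -
    have "B (\<lambda>_. 0) w = B (\<lambda>_. 0) w + B (\<lambda>_. 0) w"
      using lin[of 1 "\<lambda>_. 0" "\<lambda>_. 0" w] by (simp only: mult_zero_right add_0 mult_1)
    thus ?thesis by (simp only: add_cancel_right_right)
  qed
  have z: "lin_comb G (\<lambda>_. 0) = (\<lambda>_. 0)" by (simp add: lin_comb_def)
  have CS: "C \<subseteq> row_span (y#G)"
  proof
    fix v assume "v \<in> C"
    then obtain c where v: "v = lin_comb G c" using sp by (auto simp: row_span_def)
    have "lin_comb (y#G) (\<lambda>j. if j = 0 then 0 else c (j - 1)) = v"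
      unfolding lc_cons v by simp
    thus "v \<in> row_span (y#G)" unfolding row_span_def by blast
  qed
  have yS: "y \<in> row_span (y#G)"
  proof -
    have "y = lin_comb (y#G) (\<lambda>j. if j = 0 then 1 else 0)"
      unfolding lc_cons using z by simp
    thus ?thesis unfolding row_span_def by blast
  qed
  have indep: "rows_lin_indep (y#G)"
    unfolding rows_lin_indep_def
  proof (intro allI impI)
    fix c j assume h: "lin_comb (y#G) c = (\<lambda>_. 0)" and j: "j < length (y#G)"
    have B0: "B (\<lambda>_. 0) y = 0" by (rule Bz)
    have c0: "c 0 = 0" using key[of c] h B0 yy by simp
    hence "lin_comb G (\<lambda>j. c (Suc j)) = (\<lambda>_. 0)" using h unfolding lc_cons by simp
    hence "\<forall>j<length G. c (Suc j) = 0" using ind unfolding rows_lin_indep_def by blast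
    thus "c j = 0" using c0 j by (cases j) auto
  qed
  have lcd': "row_span (y#G) \<inter> {x. \<forall>c\<in>row_span (y#G). B x c = 0} = {\<lambda>_. 0}"
  proof
    show "row_span (y#G) \<inter> {x. \<forall>c\<in>row_span (y#G). B x c = 0} \<subseteq> {\<lambda>_. 0}"
    proof
      fix x assume "x \<in> row_span (y#G) \<inter> {x. \<forall>c\<in>row_span (y#G). B x c = 0}"
      then obtain c where x: "x = lin_comb (y#G) c" and d: "\<forall>c\<in>row_span (y#G). B x c = 0"
        by (auto simp: row_span_def)
      have "c 0 = 0" using d yS key[of c] yy x by simp
      hence xv: "x = lin_comb G (\<lambda>j. c (Suc j))" using x unfolding lc_cons by simp
      have "x \<in> C \<inter> {x. \<forall>c\<in>C. B x c = 0}" using xv inC d CS by blast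
      thus "x \<in> {\<lambda>_. 0}" using lcd by blast
    qed
    show "{\<lambda>_. 0} \<subseteq> row_span (y#G) \<inter> {x. \<forall>c\<in>row_span (y#G). B x c = 0}"
    proof -
      have "(\<lambda>_. 0) = lin_comb (y#G) (\<lambda>_. 0)" unfolding lc_cons z by simp
      hence "(\<lambda>_. 0) \<in> row_span (y#G)" unfolding row_span_def by blast
      moreover have "B (\<lambda>_. 0) w = 0" for w by (rule Bz)
      ultimately show ?thesis by blast
    qed
  qed
  show ?thesis using indep lcd' len unfolding is_generator_matrix_def by simp
qed


lemma sum_ind:
  fixes y :: "'n::finite \<Rightarrow> 'f::field"
  shows "(\<Sum>i\<in>UNIV. if y i = 0 then 0 else (1::'f)) = of_nat (wt y)"
proof -
  have "- {i. y i = 0} = {i. y i \<noteq> 0}" by auto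
  thus ?thesis unfolding wt_def by (simp add: sum.If_cases)
qed

lemma sum_sq_char2:
  fixes f :: "'i \<Rightarrow> 'f::field"
  assumes two: "(2::'f) = 0"
  shows "(sum f A)^2 = sum (\<lambda>i. (f i)^2) A"
proof (induction A rule: infinite_finite_induct)
  case (insert x F)
  have "(f x + sum f F)^2 = (f x)^2 + (sum f F)^2 + 2 * f x * sum f F"
    by (simp add: power2_eq_square algebra_simps)
  thus ?case using insert two by simp
qed auto

lemma part1:
  fixes G :: "('n::finite \<Rightarrow> 'a::field) list"
  assumes q: "card (UNIV :: 'a set) = 2" and gm: "is_generator_matrix G C k" and l: "LCD_E C"
    and y: "y \<in> dual_E C" and w: "odd (wt y)"
  shows "is_generator_matrix (y # G) (row_span (y # G)) (k + 1) \<and> LCD_E (row_span (y # G))"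
proof -
  have fin: "finite (UNIV :: 'a set)" using q card.infinite by fastforce
  have sq: "x * x = (if x = 0 then 0 else 1)" for x :: 'a
    using fin_pow[OF fin, of x] q by auto
  have two: "(2::'a) = 0" using fin_char[OF fin] q by simp
  obtain m where m: "wt y = 2*m+1" using w oddE by blast
  have "inner_E y y = of_nat (wt y)"
    unfolding inner_E_def using sq sum_ind[of y] by simp
  also have "\<dots> = 1" using m two by simp
  finally have yy: "inner_E y y \<noteq> 0" by simp
  have lin: "inner_E (\<lambda>i. a * x i + v i) w = a * inner_E x w + inner_E v w" for x v w and a :: 'a
    unfolding inner_E_def by (simp add: algebra_simps sum.distrib sum_distrib_left)
  have sym0: "inner_E v w = 0 \<Longrightarrow> inner_E w v = 0" for v w :: "'n \<Rightarrow> 'a"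
    unfolding inner_E_def by (simp add: mult.commute)
  show ?thesis using generic[of inner_E, OF lin sym0 gm, of y] l y yy
    unfolding LCD_E_def dual_E_def by blast
qed

lemma part2:
  fixes G :: "('n::finite \<Rightarrow> 'a::field) list"
  assumes q: "card (UNIV :: 'a set) = 3" and gm: "is_generator_matrix G C k" and l: "LCD_E C"
    and y: "y \<in> dual_E C" and w: "wt y mod 3 \<noteq> 0"
  shows "is_generator_matrix (y # G) (row_span (y # G)) (k + 1) \<and> LCD_E (row_span (y # G))"
proof -
  have fin: "finite (UNIV :: 'a set)" using q card.infinite by fastforce
  have sq: "x * x = (if x = 0 then 0 else 1)" for x :: 'a
    using fin_pow[OF fin, of x] q by (auto simp: power2_eq_square)
  have three: "(3::'a) = 0" using fin_char[OF fin] q by simp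
  have wd: "wt y = 3 * (wt y div 3) + wt y mod 3" by simp
  have r: "wt y mod 3 = 1 \<or> wt y mod 3 = 2" using w by linarith
  have "inner_E y y = of_nat (wt y)"
    unfolding inner_E_def using sq sum_ind[of y] by simp
  also have "\<dots> = of_nat (wt y mod 3)"
  proof -
    obtain a b where ab: "wt y = 3*a+b" "b = wt y mod 3" using wd by blast
    have "(of_nat (wt y)::'a) = of_nat (3*a+b)" by (simp only: ab(1))
    also have "\<dots> = 3 * of_nat a + of_nat b" by simp
    also have "\<dots> = of_nat b" using three by simp
    finally show ?thesis by (simp only: ab(2))
  qed
  finally have e: "inner_E y y = of_nat (wt y mod 3)" .
  have "(2::'a) \<noteq> 0"
  proof
    assume "(2::'a) = 0"
    moreover have "(3::'a) = 2 + 1" by simp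
    ultimately have "(3::'a) = 1" by simp
    thus False using three by simp
  qed
  hence yy: "inner_E y y \<noteq> 0" using e r by auto
  have lin: "inner_E (\<lambda>i. a * x i + v i) w = a * inner_E x w + inner_E v w" for x v w and a :: 'a
    unfolding inner_E_def by (simp add: algebra_simps sum.distrib sum_distrib_left)
  have sym0: "inner_E v w = 0 \<Longrightarrow> inner_E w v = 0" for v w :: "'n \<Rightarrow> 'a"
    unfolding inner_E_def by (simp add: mult.commute)
  show ?thesis using generic[of inner_E, OF lin sym0 gm, of y] l y yy
    unfolding LCD_E_def dual_E_def by blast
qed

lemma part3:
  fixes G :: "('n::finite \<Rightarrow> 'a::field) list"
  assumes q: "card (UNIV :: 'a set) = 4" and gm: "is_generator_matrix G C k" and l: "LCD_H C"
    and y: "y \<in> dual_H C" and w: "odd (wt y)"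
  shows "is_generator_matrix (y # G) (row_span (y # G)) (k + 1) \<and> LCD_H (row_span (y # G))"
proof -
  have fin: "finite (UNIV :: 'a set)" using q card.infinite by fastforce
  have cube: "x * x^2 = (if x = 0 then 0 else 1)" for x :: 'a
  proof -
    have "x \<noteq> 0 \<Longrightarrow> x^3 = 1" using fin_pow[OF fin, of x] q by simp
    thus ?thesis by (simp add: power2_eq_square power3_eq_cube mult.assoc)
  qed
  have four: "x^4 = x" for x :: 'a
  proof -
    have "x^4 = x * (x * x^2)" by (simp add: power2_eq_square power4_eq_xxxx)
    thus ?thesis using cube[of x] by auto
  qed
  have "(4::'a) = 0" using fin_char[OF fin] q by simp
  hence "(2::'a) * 2 = 0" by simp
  hence two: "(2::'a) = 0" using mult_eq_0_iff by blast
  obtain m where m: "wt y = 2*m+1" using w oddE by blast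
  have "inner_H y y = of_nat (wt y)"
    unfolding inner_H_def using cube sum_ind[of y] by simp
  also have "\<dots> = 1" using m two by simp
  finally have yy: "inner_H y y \<noteq> 0" by simp
  have lin: "inner_H (\<lambda>i. a * x i + v i) w = a * inner_H x w + inner_H v w" for x v w and a :: 'a
    unfolding inner_H_def by (simp add: algebra_simps sum.distrib sum_distrib_left)
  have sw: "(inner_H v w)^2 = inner_H w v" for v w :: "'n \<Rightarrow> 'a"
  proof -
    have "(inner_H v w)^2 = (\<Sum>i\<in>UNIV. (v i * (w i)^2)^2)"
      unfolding inner_H_def by (rule sum_sq_char2[OF two])
    also have "\<dots> = (\<Sum>i\<in>UNIV. w i * (v i)^2)"
    proof (rule sum.cong)
      fix i
      have "(v i * (w i)^2)^2 = (v i)^2 * (w i)^4"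
        by (simp add: power_mult_distrib power_mult[symmetric])
      thus "(v i * (w i)^2)^2 = w i * (v i)^2" using four[of "w i"] by simp
    qed simp
    finally show ?thesis unfolding inner_H_def .
  qed
  have sym0: "inner_H v w = 0 \<Longrightarrow> inner_H w v = 0" for v w :: "'n \<Rightarrow> 'a"
    using sw[of v w] by simp
  show ?thesis using generic[of inner_H, OF lin sym0 gm, of y] l y yy
    unfolding LCD_H_def dual_H_def by blast
qed

theorem theorem3p10:
  shows
  "(\<forall>(G :: ('n::finite \<Rightarrow> 'a::field) list) C k y.
      card (UNIV :: 'a set) = 2 \<longrightarrow> is_generator_matrix G C k \<longrightarrow> LCD_E C \<longrightarrow>
      y \<in> dual_E C \<longrightarrow> odd (wt y) \<longrightarrow>
      is_generator_matrix (y # G) (row_span (y # G)) (k + 1) \<and> LCD_E (row_span (y # G)))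
 \<and> (\<forall>(G :: ('n::finite \<Rightarrow> 'b::field) list) C k y.
      card (UNIV :: 'b set) = 3 \<longrightarrow> is_generator_matrix G C k \<longrightarrow> LCD_E C \<longrightarrow>
      y \<in> dual_E C \<longrightarrow> wt y mod 3 \<noteq> 0 \<longrightarrow>
      is_generator_matrix (y # G) (row_span (y # G)) (k + 1) \<and> LCD_E (row_span (y # G)))
 \<and> (\<forall>(G :: ('n::finite \<Rightarrow> 'c::field) list) C k y.
      card (UNIV :: 'c set) = 4 \<longrightarrow> is_generator_matrix G C k \<longrightarrow> LCD_H C \<longrightarrow>
      y \<in> dual_H C \<longrightarrow> odd (wt y) \<longrightarrow>
      is_generator_matrix (y # G) (row_span (y # G)) (k + 1) \<and> LCD_H (row_span (y # G)))"
  using part1 part2 part3 by blast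

end
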